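(* Let $(Q,\mathcal M)$ be a modulated quiver with $\mathcal M$ v-uniform, $I$ an admissible ideal of $T(Q,\mathcal M)$, $\Psi$ a complexification isomorphism, $J=\Psi(\mathbf e(I\otimes_{\mathbb R}\mathbb C)\mathbf e)$, and $p$ a path of $Q$. (1) If $\mathcal M$ is v-uniform with $\mathbb R$ or with $\mathbb H$, then $\Gamma=Q$, the path $p$ of $\Gamma$ is the only fiber of $p$, and $p\in R_I$ if and only if $p\in J$. (2) If $\mathcal M$ is v-uniform with $\mathbb C$, then $p$ has exactly two fibers $p',p''$ in $\Gamma$, and $p\in R_I\iff p'\in J\iff p''\in J$.
   Context: Quivers $Q=(Q_0,Q_1,s,t)$ are finite; an arrow $\alpha$ goes from $s(\alpha)$ to $t(\alpha)$. Paths are written from right to left: a path of length $n\ge1$ is $p=\alpha_n\cdots\alpha_1$ with $t(\alpha_k)=s(\alpha_{k+1})$; each vertex $i$ has a trivial path $e_i$. For a division ring $D$, $DQ$ denotes the path algebra of $Q$ over $D$ (free left $D$-module on the paths, scalars commuting with paths, multiplication by concatenation). Let $\mathbb H=\{\begin{bmatrix}a&b\\-\bar b&\bar a\end{bmatrix}:a,b\in\mathbb C\}\subset M_2(\mathbb C)$ be the real quaternions. A modulation $\mathcal M$ of $Q$ assigns to each vertex $i$ a division ring $\mathcal M(i)\in\{\mathbb R,\mathbb C,\mathbb H\}$ and to each arrow $\alpha$ a simple $\mathcal M(t(\alpha))$-$\mathcal M(s(\alpha))$-bimodule $\mathcal M(\alpha)$ on which $\mathbb R$ acts centrally; $(Q,\mathcal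 M)$ is a modulated quiver. Up to isomorphism there is exactly one such simple bimodule for each pair of these division rings other than $(\mathbb C,\mathbb C)$, and for $(\mathbb C,\mathbb C)$ there are exactly two: $\mathbb C$ with action $a\cdot z\cdot b=azb$, and $\overline{\mathbb C}$, which is $\mathbb C$ as a set with action $a\cdot z\cdot b=az\bar b$. For a path $p=\alpha_n\cdots\alpha_1$ put $\mathcal M(p)=\mathcal M(\alpha_n)\otimes_{\mathcal M(s(\alpha_n))}\cdots\otimes_{\mathcal M(s(\alpha_2))}\mathcal M(\alpha_1)$, and $\mathcal M(e_i)=\mathcal M(i)$. The tensor algebra is $T(Q,\mathcal M)=\prod_{i\in Q_0}\mathcal M(i)\oplus\bigoplus_{p}\mathcal M(p)$ (sum over paths of length $\ge1$). An ideal $I$ of $T(Q,\mathcal M)$ is admissible if $A^m\subseteq I\subseteq A^2$ for some $m\ge2$, where $A$ is the ideal generated by $\bigoplus_{\alpha\in Q_1}\mathcal M(\alpha)$. $\mathcal M$ is v-uniform with $D\in\{\mathbb R,\mathbb C,\mathbb H\}$ if $\mathcal M(i)=D$ for all $i\in Q_0$. Then every $\mathcal M(\alpha)$ has underlying set $D$, and for a path $p$ we write $1_{\mathcal M(p)}=1\otimes\cdots\otimes1\in\mathcal M(p)$ ($1_{\mathcal M(e_i)}$ being the identity of $\mathcal M(i)$). For an ideal $I$ of $T(Q,\mathcal M)$ put $R_I=\{\sum_k d_kp_k\in DQ:\ \sum_k d_k1_{\mathcal M(p_k)}\in I\}$, an ideal of $DQ$. The quiver $\Gamma$ of $(Q,\mathcal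 M)$: each $i\in Q_0$ with $\mathcal M(i)\in\{\mathbb R,\mathbb H\}$ gives one vertex $i$ of $\Gamma$; each $i$ with $\mathcal M(i)=\mathbb C$ gives two vertices $i,\bar i$. Each arrow $\alpha:i\to j$ of $Q$ gives arrows of $\Gamma$ as follows: if $\mathcal M(i)=\mathcal M(j)\in\{\mathbb R,\mathbb H\}$, one arrow $\alpha:i\to j$; if $\mathcal M(i)=\mathbb C$ and $\mathcal M(j)\in\{\mathbb R,\mathbb H\}$, arrows $\alpha:i\to j$, $\bar\alpha:\bar i\to j$; if $\mathcal M(i)\in\{\mathbb R,\mathbb H\}$ and $\mathcal M(j)=\mathbb C$, arrows $\alpha:i\to j$, $\bar\alpha:i\to\bar j$; if $\{\mathcal M(i),\mathcal M(j)\}=\{\mathbb R,\mathbb H\}$, two arrows $\alpha,\bar\alpha:i\to j$; if $\mathcal M(i)=\mathcal M(j)=\mathbb C$ and $\mathcal M(\alpha)=\mathbb C$, arrows $\alpha:i\to j$, $\bar\alpha:\bar i\to\bar j$; if $\mathcal M(i)=\mathcal M(j)=\mathbb C$ and $\mathcal M(\alpha)=\overline{\mathbb C}$, arrows $\alpha:\bar i\to j$, $\bar\alpha:i\to\bar j$. The map $\pi:\Gamma\to Q$ sends $i,\bar i\mapsto i$ and $\alpha,\bar\alpha\mapsto\alpha$. A vertex or arrow $x$ of $\Gamma$ is a fiber of $\pi(x)$; a path $\beta_n\cdots\beta_1$ of $\Gamma$ is a fiber of the path $\pi(\beta_n)\cdots\pi(\beta_1)$ of $Q$, and the fibers of a trivial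 path $e_i$ are the trivial paths $e_{i'}$ with $i'$ a fiber of $i$. Identify $\mathbb R\otimes_{\mathbb R}\mathbb C=\mathbb C$, $\mathbb H\otimes_{\mathbb R}\mathbb C\cong M_2(\mathbb C)$ via $h\otimes c\mapsto ch$, and $\mathbb C\otimes_{\mathbb R}\mathbb C\cong\mathbb C\times\mathbb C$ via $a\otimes b\mapsto(ab,\bar ab)$. Let $\mathbf e=(\epsilon_i)_{i\in Q_0}\in\prod_i\mathcal M(i)\otimes_{\mathbb R}\mathbb C\subseteq T(Q,\mathcal M)\otimes_{\mathbb R}\mathbb C$, where $\epsilon_i=1$ if $\mathcal M(i)\in\{\mathbb R,\mathbb C\}$ and $\epsilon_i$ corresponds to the matrix unit $\begin{bmatrix}1&0\\0&0\end{bmatrix}$ if $\mathcal M(i)=\mathbb H$. A complexification isomorphism for $(Q,\mathcal M)$ is a $\mathbb C$-algebra isomorphism $\Psi:\mathbf e(T(Q,\mathcal M)\otimes_{\mathbb R}\mathbb C)\mathbf e\to\mathbb C\Gamma$ such that for every path $p$ of $Q$ (trivial or not), $\Psi(\mathbf e(\mathcal M(p)\otimes_{\mathbb R}\mathbb C)\mathbf e)=\bigoplus_q\mathbb Cq$, the sum over all fibers $q$ of $p$ in $\Gamma$; such isomorphisms exist. *)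

theory Defs
  imports Complex_Main
begin

text \<open>Quat a b represents the complex 2x2 matrix [[a, b], [-cnj b, cnj a]].\<close>

datatype quat = Quat complex complex

fun qa :: "quat \<Rightarrow> complex" where "qa (Quat a b) = a"
fun qb :: "quat \<Rightarrow> complex" where "qb (Quat a b) = b"

lemma quat_eq_iff: "x = y \<longleftrightarrow> qa x = qa y \<and> qb x = qb y"
  by (cases x; cases y) auto

instantiation quat :: "{real_vector, times, one}"
begin
definition "0 = Quat 0 0"
definition "1 = Quat 1 0"
definition "x + y = Quat (qa x + qa y) (qb x + qb y)"
definition "- x = Quat (- qa x) (- qb x)"
definition "x - y = Quat (qa x - qa y) (qb x - qb y)"
definition "x * y = Quat (qa x * qa y - qb x * cnj (qb y)) (qa x * qb y + qb x * cnj (qa y))"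
definition "scaleR r x = Quat (scaleR r (qa x)) (scaleR r (qb x))"
instance
  by standard (auto simp: quat_eq_iff zero_quat_def plus_quat_def uminus_quat_def
      minus_quat_def scaleR_quat_def algebra_simps)
end

definition quat_i :: quat where "quat_i = Quat \<i> 0"

record ('v,'a) quiver =
  verts :: "'v set"
  arrs :: "'a set"
  src :: "'a \<Rightarrow> 'v"
  tgt :: "'a \<Rightarrow> 'v"

definition finite_quiver :: "('v,'a) quiver \<Rightarrow> bool" where
  "finite_quiver Q \<longleftrightarrow> finite (verts Q) \<and> finite (arrs Q) \<and>
     (\<forall>\<alpha>\<in>arrs Q. src Q \<alpha> \<in> verts Q \<and> tgt Q \<alpha> \<in> verts Q)"

text \<open>A path is a pair (v, [a1,...,an]) standing for the path an...a1 starting at v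
  (with s(a1) = v); (v, []) is the trivial path e_v.\<close>
type_synonym ('v,'a) path = "'v \<times> 'a list"

definition is_path :: "('v,'a) quiver \<Rightarrow> ('v,'a) path \<Rightarrow> bool" where
  "is_path Q p \<longleftrightarrow> fst p \<in> verts Q \<and> set (snd p) \<subseteq> arrs Q \<and>
     (snd p \<noteq> [] \<longrightarrow> src Q (hd (snd p)) = fst p) \<and>
     (\<forall>k. Suc k < length (snd p) \<longrightarrow> tgt Q (snd p ! k) = src Q (snd p ! Suc k))"

definition psrc :: "('v,'a) path \<Rightarrow> 'v" where "psrc p = fst p"

definition ptgt :: "('v,'a) quiver \<Rightarrow> ('v,'a) path \<Rightarrow> 'v" where
  "ptgt Q p = (if snd p = [] then fst p else tgt Q (last (snd p)))"

text \<open>pcomp q p is the concatenation q p (first p, then q); meaningful if ptgt p = psrc q.\<close>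
definition pcomp :: "('v,'a) path \<Rightarrow> ('v,'a) path \<Rightarrow> ('v,'a) path" where
  "pcomp q p = (fst p, snd p @ snd q)"

text \<open>For a v-uniform modulation with division ring D, every M(p) is free of rank one as a
  left D-module on 1_{M(p)}, and 1_{M(alpha)} b = tw alpha b 1_{M(alpha)}, where the twist tw alpha
  is the identity except for the bimodule conj(C), where it is complex conjugation.
  Hence an element of T(Q,M) is a finitely supported function from paths to D,
  sum d_p 1_{M(p)}, and 1_{M(q)} b 1_{M(p)} = tw_q(b) 1_{M(qp)}.
  With tw = identity this is exactly the path algebra DQ.\<close>

definition supp :: "('p \<Rightarrow> 'd::zero) \<Rightarrow> 'p set" where
  "supp f = {p. f p \<noteq> 0}"

definition alg_carrier :: "('v,'a) quiver \<Rightarrow> (('v,'a) path \<Rightarrow> 'd::zero) set" where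
  "alg_carrier Q = {f. finite (supp f) \<and> (\<forall>p. f p \<noteq> 0 \<longrightarrow> is_path Q p)}"

fun path_twist :: "('a \<Rightarrow> 'd \<Rightarrow> 'd) \<Rightarrow> 'a list \<Rightarrow> 'd \<Rightarrow> 'd" where
  "path_twist tw [] = id"
| "path_twist tw (\<alpha> # as) = path_twist tw as \<circ> tw \<alpha>"

definition tmul :: "('v,'a) quiver \<Rightarrow> ('a \<Rightarrow> 'd \<Rightarrow> 'd) \<Rightarrow>
    (('v,'a) path \<Rightarrow> 'd::{comm_monoid_add,times}) \<Rightarrow> (('v,'a) path \<Rightarrow> 'd) \<Rightarrow> (('v,'a) path \<Rightarrow> 'd)" where
  "tmul Q tw f g = (\<lambda>r. \<Sum>q\<in>supp f. \<Sum>p\<in>supp g.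
      if ptgt Q p = psrc q \<and> pcomp q p = r then f q * path_twist tw (snd q) (g p) else 0)"

definition tadd :: "('p \<Rightarrow> 'd::plus) \<Rightarrow> ('p \<Rightarrow> 'd) \<Rightarrow> ('p \<Rightarrow> 'd)" where
  "tadd f g = (\<lambda>r. f r + g r)"

definition tzero :: "'p \<Rightarrow> 'd::zero" where "tzero = (\<lambda>_. 0)"

definition tone :: "('v,'a) quiver \<Rightarrow> ('v,'a) path \<Rightarrow> 'd::{zero,one}" where
  "tone Q = (\<lambda>p. if snd p = [] \<and> fst p \<in> verts Q then 1 else 0)"

text \<open>delta p d is the element d 1_{M(p)} (resp. the element d p of DQ).\<close>
definition delta :: "('v,'a) path \<Rightarrow> 'd::zero \<Rightarrow> ('v,'a) path \<Rightarrow> 'd" where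
  "delta p d = (\<lambda>r. if r = p then d else 0)"

definition is_ideal :: "('v,'a) quiver \<Rightarrow> ('a \<Rightarrow> 'd \<Rightarrow> 'd) \<Rightarrow>
    (('v,'a) path \<Rightarrow> 'd::{ab_group_add,times}) set \<Rightarrow> bool" where
  "is_ideal Q tw I \<longleftrightarrow> I \<subseteq> alg_carrier Q \<and> tzero \<in> I \<and>
     (\<forall>x\<in>I. \<forall>y\<in>I. tadd x y \<in> I) \<and> (\<forall>x\<in>I. (\<lambda>r. - x r) \<in> I) \<and>
     (\<forall>x\<in>I. \<forall>a\<in>alg_carrier Q. tmul Q tw a x \<in> I \<and> tmul Q tw x a \<in> I)"

definition ideal_gen :: "('v,'a) quiver \<Rightarrow> ('a \<Rightarrow> 'd \<Rightarrow> 'd) \<Rightarrow>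
    (('v,'a) path \<Rightarrow> 'd::{ab_group_add,times}) set \<Rightarrow> (('v,'a) path \<Rightarrow> 'd) set" where
  "ideal_gen Q tw S = \<Inter> {I. is_ideal Q tw I \<and> S \<subseteq> I}"

definition arrow_ideal :: "('v,'a) quiver \<Rightarrow> ('a \<Rightarrow> 'd \<Rightarrow> 'd) \<Rightarrow>
    (('v,'a) path \<Rightarrow> 'd::{ab_group_add,times}) set" where
  "arrow_ideal Q tw = ideal_gen Q tw {delta (src Q \<alpha>, [\<alpha>]) d | \<alpha> d. \<alpha> \<in> arrs Q}"

primrec ideal_pow :: "('v,'a) quiver \<Rightarrow> ('a \<Rightarrow> 'd \<Rightarrow> 'd) \<Rightarrow>
    (('v,'a) path \<Rightarrow> 'd::{ab_group_add,times}) set \<Rightarrow> nat \<Rightarrow> (('v,'a) path \<Rightarrow> 'd) set" where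
  "ideal_pow Q tw A 0 = alg_carrier Q"
| "ideal_pow Q tw A (Suc n) = ideal_gen Q tw {tmul Q tw x y | x y. x \<in> ideal_pow Q tw A n \<and> y \<in> A}"

definition admissible :: "('v,'a) quiver \<Rightarrow> ('a \<Rightarrow> 'd \<Rightarrow> 'd) \<Rightarrow>
    (('v,'a) path \<Rightarrow> 'd::{ab_group_add,times}) set \<Rightarrow> bool" where
  "admissible Q tw I \<longleftrightarrow> is_ideal Q tw I \<and>
     (\<exists>m\<ge>2. ideal_pow Q tw (arrow_ideal Q tw) m \<subseteq> I \<and> I \<subseteq> ideal_pow Q tw (arrow_ideal Q tw) 2)"

text \<open>R_I: the elements sum d_k p_k of DQ with sum d_k 1_{M(p_k)} in I. Both DQ and
  T(Q,M) are modelled on the same finitely supported functions, p corresponding to 1_{M(p)}.\<close>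
definition R_ideal :: "('v,'a) quiver \<Rightarrow> (('v,'a) path \<Rightarrow> 'd::zero) set \<Rightarrow> (('v,'a) path \<Rightarrow> 'd) set" where
  "R_ideal Q I = {f \<in> alg_carrier Q. f \<in> I}"

text \<open>T tensor_R C is modelled as pairs (x, y) standing for x (x) 1 + y (x) i.\<close>
type_synonym ('v,'a,'d) cplx = "(('v,'a) path \<Rightarrow> 'd) \<times> (('v,'a) path \<Rightarrow> 'd)"

definition cmul :: "('v,'a) quiver \<Rightarrow> ('a \<Rightarrow> 'd \<Rightarrow> 'd) \<Rightarrow>
    ('v,'a,'d::{ab_group_add,times}) cplx \<Rightarrow> ('v,'a,'d) cplx \<Rightarrow> ('v,'a,'d) cplx" where
  "cmul Q tw u w = ((\<lambda>r. tmul Q tw (fst u) (fst w) r - tmul Q tw (snd u) (snd w) r),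
                    (\<lambda>r. tmul Q tw (fst u) (snd w) r + tmul Q tw (snd u) (fst w) r))"

definition cadd :: "('v,'a,'d::plus) cplx \<Rightarrow> ('v,'a,'d) cplx \<Rightarrow> ('v,'a,'d) cplx" where
  "cadd u w = (tadd (fst u) (fst w), tadd (snd u) (snd w))"

definition cscale :: "complex \<Rightarrow> ('v,'a,'d::real_vector) cplx \<Rightarrow> ('v,'a,'d) cplx" where
  "cscale c u = ((\<lambda>r. Re c *\<^sub>R fst u r - Im c *\<^sub>R snd u r),
                 (\<lambda>r. Re c *\<^sub>R snd u r + Im c *\<^sub>R fst u r))"

text \<open>The idempotent e = (epsilon_i)_i, where epsilon = er (x) 1 + ei (x) i in D (x)_R C.\<close>
definition e_elt :: "('v,'a) quiver \<Rightarrow> 'd \<times> 'd \<Rightarrow> ('v,'a,'d::zero) cplx" where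
  "e_elt Q eps = ((\<lambda>p. if snd p = [] \<and> fst p \<in> verts Q then fst eps else 0),
                  (\<lambda>p. if snd p = [] \<and> fst p \<in> verts Q then snd eps else 0))"

definition corner :: "('v,'a) quiver \<Rightarrow> ('a \<Rightarrow> 'd \<Rightarrow> 'd) \<Rightarrow> 'd \<times> 'd \<Rightarrow>
    ('v,'a,'d::{ab_group_add,times}) cplx set \<Rightarrow> ('v,'a,'d) cplx set" where
  "corner Q tw eps X = {cmul Q tw (cmul Q tw (e_elt Q eps) z) (e_elt Q eps) | z. z \<in> X}"

definition fiber_of :: "('w \<Rightarrow> 'v) \<Rightarrow> ('b \<Rightarrow> 'a) \<Rightarrow> ('w,'b) quiver \<Rightarrow> ('w,'b) path \<Rightarrow>
    ('v,'a) path \<Rightarrow> bool" where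
  "fiber_of piv pia G q p \<longleftrightarrow> is_path G q \<and> piv (fst q) = fst p \<and> map pia (snd q) = snd p"

text \<open>Complexification isomorphism Psi : e (T tensor C) e \<rightarrow> C Gamma, with
  projection (piv, pia) : Gamma \<rightarrow> Q.\<close>
definition complexif_iso :: "('v,'a) quiver \<Rightarrow> ('a \<Rightarrow> 'd \<Rightarrow> 'd) \<Rightarrow> 'd \<times> 'd \<Rightarrow>
    ('w,'b) quiver \<Rightarrow> ('w \<Rightarrow> 'v) \<Rightarrow> ('b \<Rightarrow> 'a) \<Rightarrow>
    (('v,'a,'d::{real_vector,times}) cplx \<Rightarrow> (('w,'b) path \<Rightarrow> complex)) \<Rightarrow> bool" where
  "complexif_iso Q tw eps G piv pia \<Psi> \<longleftrightarrow>
     (let E = corner Q tw eps (alg_carrier Q \<times> alg_carrier Q) in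
     bij_betw \<Psi> E (alg_carrier G) \<and>
     (\<forall>u\<in>E. \<forall>w\<in>E. \<Psi> (cadd u w) = tadd (\<Psi> u) (\<Psi> w) \<and>
                    \<Psi> (cmul Q tw u w) = tmul G (\<lambda>_. id) (\<Psi> u) (\<Psi> w)) \<and>
     (\<forall>c. \<forall>u\<in>E. \<Psi> (cscale c u) = (\<lambda>r. c * \<Psi> u r)) \<and>
     (\<forall>p. is_path Q p \<longrightarrow>
        \<Psi> ` corner Q tw eps {(delta p a, delta p b) | a b. True} =
        {f \<in> alg_carrier G. \<forall>r. f r \<noteq> 0 \<longrightarrow> fiber_of piv pia G r p}))"

definition J_ideal :: "('v,'a) quiver \<Rightarrow> ('a \<Rightarrow> 'd \<Rightarrow> 'd) \<Rightarrow> 'd \<times> 'd \<Rightarrow>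
    (('v,'a,'d::{ab_group_add,times}) cplx \<Rightarrow> 'g) \<Rightarrow> (('v,'a) path \<Rightarrow> 'd) set \<Rightarrow> 'g set" where
  "J_ideal Q tw eps \<Psi> I = \<Psi> ` corner Q tw eps (I \<times> I)"

text \<open>v-uniform with C: cbar alpha says M(alpha) = conj(C). Vertex (i, False) is i,
  (i, True) is bar i; arrow (alpha, False) is alpha, (alpha, True) is bar alpha.\<close>
definition gammaC :: "('v,'a) quiver \<Rightarrow> ('a \<Rightarrow> bool) \<Rightarrow> ('v \<times> bool, 'a \<times> bool) quiver" where
  "gammaC Q cbar = \<lparr> verts = verts Q \<times> UNIV, arrs = arrs Q \<times> UNIV,
      src = (\<lambda>(\<alpha>, b). (src Q \<alpha>, b \<noteq> cbar \<alpha>)), tgt = (\<lambda>(\<alpha>, b). (tgt Q \<alpha>, b)) \<rparr>"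

definition twistC :: "('a \<Rightarrow> bool) \<Rightarrow> 'a \<Rightarrow> complex \<Rightarrow> complex" where
  "twistC cbar \<alpha> = (if cbar \<alpha> then cnj else id)"

text \<open>v-uniform with R or H: all bimodules standard, Gamma has the same vertices and arrows.\<close>
definition gammaRH :: "('v,'a) quiver \<Rightarrow> ('v,'a) quiver" where
  "gammaRH Q = Q"

end

theory Submission
  imports Defs
begin


definition scal :: "('v,'a) quiver \<Rightarrow> 'd::zero \<Rightarrow> ('v,'a) path \<Rightarrow> 'd" where
  "scal Q s = (\<lambda>p. if snd p = [] \<and> fst p \<in> verts Q then s else 0)"

lemma e_elt_scal: "e_elt Q eps = (scal Q (fst eps), scal Q (snd eps))"
  by (simp add: e_elt_def scal_def)

lemma supp_scal: "supp (scal Q s) = (if s = 0 then {} else (\<lambda>v. (v, [])) ` verts Q)"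
  by (auto simp: supp_def scal_def)

lemma is_path_triv: "v \<in> verts Q \<Longrightarrow> is_path Q (v, [])"
  by (simp add: is_path_def)

lemma scal_carrier: "finite_quiver Q \<Longrightarrow> scal Q s \<in> alg_carrier Q"
  unfolding alg_carrier_def
  by (auto simp: supp_scal finite_quiver_def is_path_triv) (auto simp: scal_def is_path_triv split: if_splits)

lemma ptgt_verts: "finite_quiver Q \<Longrightarrow> is_path Q r \<Longrightarrow> ptgt Q r \<in> verts Q"
  unfolding ptgt_def is_path_def finite_quiver_def
  by (metis (no_types, lifting) last_in_set subset_iff)

lemma path_twist_zero: "(\<And>\<alpha>. tw \<alpha> 0 = 0) \<Longrightarrow> path_twist tw as 0 = (0::'d::zero)"
  by (induction as) auto

lemma tmul_scal_left:
  fixes f :: "('v,'a) path \<Rightarrow> 'd::{comm_monoid_add,times}"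
  assumes fin: "finite_quiver Q" and f: "f \<in> alg_carrier Q"
    and z1: "\<And>x::'d. 0 * x = 0" and z2: "\<And>x::'d. x * 0 = 0"
  shows "tmul Q tw (scal Q s) f = (\<lambda>r. s * f r)"
proof
  fix r
  show "tmul Q tw (scal Q s) f r = s * f r"
  proof (cases "s = 0")
    case True
    then show ?thesis by (simp add: tmul_def supp_scal z1)
  next
    case False
    have fv: "finite (verts Q)" using fin by (simp add: finite_quiver_def)
    have fs: "finite (supp f)" using f by (simp add: alg_carrier_def)
    have inj: "inj_on (\<lambda>v. (v, [])) (verts Q)" by (auto simp: inj_on_def)
    have "tmul Q tw (scal Q s) f r = (\<Sum>v\<in>verts Q. \<Sum>p\<in>supp f.
        if ptgt Q p = v \<and> p = r then s * f p else 0)"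
      unfolding tmul_def supp_scal using False
      by (auto simp: sum.reindex[OF inj] psrc_def pcomp_def scal_def intro!: sum.cong)
    also have "\<dots> = (\<Sum>p\<in>supp f. \<Sum>v\<in>verts Q.
        if v = ptgt Q p then (if p = r then s * f p else 0) else 0)"
      by (subst sum.swap) (auto intro!: sum.cong)
    also have "\<dots> = (\<Sum>p\<in>supp f. if p = r then s * f p else 0)"
    proof (rule sum.cong)
      fix p assume "p \<in> supp f"
      then have "is_path Q p" using f unfolding alg_carrier_def supp_def by blast
      then have "ptgt Q p \<in> verts Q" using ptgt_verts fin by blast
      then show "(\<Sum>v\<in>verts Q. if v = ptgt Q p then (if p = r then s * f p else 0) else 0)
          = (if p = r then s * f p else 0)"
        using fv by (simp add: sum.delta)
    qed simp
    also have "\<dots> = s * f r"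
      using fs by (simp add: sum.delta' supp_def z2)
    finally show ?thesis .
  qed
qed

lemma tmul_scal_right:
  fixes f :: "('v,'a) path \<Rightarrow> 'd::{comm_monoid_add,times}"
  assumes fin: "finite_quiver Q" and f: "f \<in> alg_carrier Q"
    and z1: "\<And>x::'d. 0 * x = 0" and z2: "\<And>x::'d. x * 0 = 0"
    and tw0: "\<And>\<alpha>. tw \<alpha> (0::'d) = 0"
  shows "tmul Q tw f (scal Q s) = (\<lambda>r. f r * path_twist tw (snd r) s)"
proof
  fix r
  show "tmul Q tw f (scal Q s) r = f r * path_twist tw (snd r) s"
  proof (cases "s = 0")
    case True
    then show ?thesis by (simp add: tmul_def supp_scal z2 path_twist_zero tw0)
  next
    case False
    have fv: "finite (verts Q)" using fin by (simp add: finite_quiver_def)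
    have fs: "finite (supp f)" using f by (simp add: alg_carrier_def)
    have inj: "inj_on (\<lambda>v. (v, [])) (verts Q)" by (auto simp: inj_on_def)
    have "tmul Q tw f (scal Q s) r = (\<Sum>q\<in>supp f. \<Sum>v\<in>verts Q.
        if v = fst q then (if q = r then f q * path_twist tw (snd q) s else 0) else 0)"
      unfolding tmul_def supp_scal using False
      by (auto simp: sum.reindex[OF inj] psrc_def pcomp_def scal_def ptgt_def
          intro!: sum.cong)
    also have "\<dots> = (\<Sum>q\<in>supp f. if q = r then f q * path_twist tw (snd q) s else 0)"
    proof (rule sum.cong)
      fix p assume "p \<in> supp f"
      then have "is_path Q p" using f unfolding alg_carrier_def supp_def by blast
      then have "fst p \<in> verts Q" by (simp add: is_path_def)
      then show "(\<Sum>v\<in>verts Q. if v = fst p then (if p = r then f p * path_twist tw (snd p) s else 0) else 0)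
          = (if p = r then f p * path_twist tw (snd p) s else 0)"
        using fv by (simp add: sum.delta)
    qed simp
    also have "\<dots> = f r * path_twist tw (snd r) s"
      using fs by (simp add: sum.delta' supp_def z1)
    finally show ?thesis .
  qed
qed

lemma delta_carrier: "is_path Q p \<Longrightarrow> delta p a \<in> alg_carrier Q"
proof -
  assume "is_path Q p"
  moreover have "supp (delta p a) \<subseteq> {p}" by (auto simp: supp_def delta_def)
  ultimately show ?thesis
    unfolding alg_carrier_def by (auto intro: finite_subset simp: delta_def)
qed

lemma corner_mono: "X \<subseteq> Y \<Longrightarrow> corner Q tw eps X \<subseteq> corner Q tw eps Y"
  unfolding corner_def by blast

lemma ideal_diff:
  assumes "is_ideal Q tw I" "a \<in> I" "b \<in> I"
  shows "(\<lambda>r. a r - b r) \<in> I"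
proof -
  have "(\<lambda>r. - b r) \<in> I" using assms unfolding is_ideal_def by blast
  then have "tadd a (\<lambda>r. - b r) \<in> I" using assms unfolding is_ideal_def by blast
  then show ?thesis by (simp add: tadd_def)
qed

lemma ideal_add:
  assumes "is_ideal Q tw I" "a \<in> I" "b \<in> I"
  shows "(\<lambda>r. a r + b r) \<in> I"
  using assms unfolding is_ideal_def tadd_def by blast

lemma ideal_lmul: "is_ideal Q tw I \<Longrightarrow> a \<in> alg_carrier Q \<Longrightarrow> x \<in> I \<Longrightarrow> tmul Q tw a x \<in> I"
  unfolding is_ideal_def by blast
lemma ideal_rmul: "is_ideal Q tw I \<Longrightarrow> a \<in> alg_carrier Q \<Longrightarrow> x \<in> I \<Longrightarrow> tmul Q tw x a \<in> I"
  unfolding is_ideal_def by blast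

lemma corner_in_I:
  fixes I :: "(('v,'a) path \<Rightarrow> 'd::{ab_group_add,times}) set"
  assumes fin: "finite_quiver Q" and I: "is_ideal Q tw I" and xy: "x \<in> I" "y \<in> I"
  shows "fst (cmul Q tw (cmul Q tw (e_elt Q eps) (x, y)) (e_elt Q eps)) \<in> I \<and>
         snd (cmul Q tw (cmul Q tw (e_elt Q eps) (x, y)) (e_elt Q eps)) \<in> I"
proof -
  note sc = scal_carrier[OF fin]
  define X where "X = (\<lambda>r. tmul Q tw (scal Q (fst eps)) x r - tmul Q tw (scal Q (snd eps)) y r)"
  define Y where "Y = (\<lambda>r. tmul Q tw (scal Q (fst eps)) y r + tmul Q tw (scal Q (snd eps)) x r)"
  have X: "X \<in> I" unfolding X_def by (intro ideal_diff[OF I] ideal_lmul[OF I] sc xy)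
  have Y: "Y \<in> I" unfolding Y_def by (intro ideal_add[OF I] ideal_lmul[OF I] sc xy)
  have "cmul Q tw (e_elt Q eps) (x, y) = (X, Y)"
    by (simp add: cmul_def e_elt_scal X_def Y_def)
  then show ?thesis
    by (simp add: cmul_def e_elt_scal ideal_diff[OF I] ideal_add[OF I] ideal_rmul[OF I] sc X Y)
qed

lemma corner_delta:
  fixes a b :: "'d::{ab_group_add,times}"
  assumes fin: "finite_quiver Q" and p: "is_path Q p"
    and z1: "\<And>x::'d. 0 * x = 0" and z2: "\<And>x::'d. x * 0 = 0"
    and tw0: "\<And>\<alpha>. tw \<alpha> (0::'d) = 0"
  shows "\<exists>A B. cmul Q tw (cmul Q tw (e_elt Q eps) (delta p a, delta p b)) (e_elt Q eps)
      = (delta p A, delta p B)"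
proof -
  note dc = delta_carrier[OF p]
  define X where "X = fst eps * a - snd eps * b"
  define Y where "Y = fst eps * b + snd eps * a"
  have 1: "cmul Q tw (e_elt Q eps) (delta p a, delta p b) = (delta p X, delta p Y)"
    unfolding cmul_def e_elt_scal fst_conv snd_conv tmul_scal_left[OF fin dc[of a] z1 z2] tmul_scal_left[OF fin dc[of b] z1 z2]
    by (auto simp: X_def Y_def delta_def z2)
  have 2: "cmul Q tw (delta p X, delta p Y) (e_elt Q eps) =
     (delta p (X * path_twist tw (snd p) (fst eps) - Y * path_twist tw (snd p) (snd eps)),
      delta p (X * path_twist tw (snd p) (snd eps) + Y * path_twist tw (snd p) (fst eps)))"
    unfolding cmul_def e_elt_scal fst_conv snd_conv tmul_scal_right[where tw=tw, OF fin dc[of X] z1 z2 tw0] tmul_scal_right[where tw=tw, OF fin dc[of Y] z1 z2 tw0]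
    by (auto simp: delta_def z1 fun_eq_iff)
  show ?thesis unfolding 1 2 by blast
qed

lemma delta_scal:
  fixes A B :: "'d::{comm_monoid_add,times}"
  assumes fin: "finite_quiver Q" and p: "is_path Q p"
    and z1: "\<And>x::'d. 0 * x = 0" and z2: "\<And>x::'d. x * 0 = 0"
  shows "tmul Q tw (scal Q B) (delta p A) = delta p (B * A)"
  unfolding tmul_scal_left[OF fin delta_carrier[OF p] z1 z2]
  by (auto simp: delta_def z2)

lemma generic:
  fixes I :: "(('v,'a) path \<Rightarrow> 'd::{real_vector,times,one}) set"
    and G :: "('w,'b) quiver"
  assumes fin: "finite_quiver Q" and I: "is_ideal Q tw I"
    and iso: "complexif_iso Q tw eps G piv pia \<Psi>"
    and p: "is_path Q p" and q: "fiber_of piv pia G q p"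
    and z1: "\<And>x::'d. 0 * x = 0" and z2: "\<And>x::'d. x * 0 = 0"
    and tw0: "\<And>\<alpha>. tw \<alpha> (0::'d) = 0"
    and one: "\<And>x::'d. x * 1 = x" and inv: "\<And>A::'d. A \<noteq> 0 \<Longrightarrow> \<exists>B. B * A = 1"
  shows "delta p 1 \<in> R_ideal Q I \<longleftrightarrow> delta q (1::complex) \<in> J_ideal Q tw eps \<Psi> I"
proof -
  define E where "E = corner Q tw eps (alg_carrier Q \<times> alg_carrier Q)"
  define V where "V = {(delta p (a::'d), delta p (b::'d)) | a b. True}"
  define W where "W = {f \<in> (alg_carrier G :: (_ \<Rightarrow> complex) set). \<forall>r. f r \<noteq> 0 \<longrightarrow> fiber_of piv pia G r p}"
  have bij: "bij_betw \<Psi> E (alg_carrier G)"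
    and add: "\<forall>u\<in>E. \<forall>w\<in>E. \<Psi> (cadd u w) = tadd (\<Psi> u) (\<Psi> w)"
    and img: "\<Psi> ` corner Q tw eps V = W"
    using iso p unfolding complexif_iso_def Let_def E_def V_def W_def by blast+
  have Icar: "I \<subseteq> alg_carrier Q" using I by (simp add: is_ideal_def)
  have VE: "corner Q tw eps V \<subseteq> E" unfolding E_def V_def
    by (rule corner_mono) (auto simp: delta_carrier[OF p])
  have IE: "corner Q tw eps (I \<times> I) \<subseteq> E" unfolding E_def
    by (rule corner_mono) (use Icar in auto)
  have qG: "is_path G q" using q by (simp add: fiber_of_def)
  have dqW: "delta q (1::complex) \<in> W"
    unfolding W_def using delta_carrier[OF qG] q by (auto simp: delta_def)
  have "delta p 1 \<in> R_ideal Q I \<longleftrightarrow> delta p 1 \<in> I"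
    by (simp add: R_ideal_def delta_carrier[OF p])
  also have "\<dots> \<longleftrightarrow> delta q (1::complex) \<in> J_ideal Q tw eps \<Psi> I"
  proof
    assume d1: "delta p 1 \<in> I"
    have "delta p a \<in> I" for a :: 'd
    proof -
      have "tmul Q tw (scal Q a) (delta p 1) \<in> I"
        by (rule ideal_lmul[OF I scal_carrier[OF fin] d1])
      then show ?thesis by (simp add: delta_scal[OF fin p z1 z2] one)
    qed
    then have "V \<subseteq> I \<times> I" unfolding V_def by auto
    then have "corner Q tw eps V \<subseteq> corner Q tw eps (I \<times> I)" by (rule corner_mono)
    then have "\<Psi> ` corner Q tw eps V \<subseteq> \<Psi> ` corner Q tw eps (I \<times> I)" by (rule image_mono)
    then have "W \<subseteq> J_ideal Q tw eps \<Psi> I" by (simp only: J_ideal_def img)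
    then show "delta q 1 \<in> J_ideal Q tw eps \<Psi> I" using dqW by (rule subsetD)
  next
    assume "delta q 1 \<in> J_ideal Q tw eps \<Psi> I"
    then have "delta q 1 \<in> \<Psi> ` corner Q tw eps (I \<times> I)" by (simp only: J_ideal_def)
    then obtain w where w: "w \<in> corner Q tw eps (I \<times> I)" and Pw: "\<Psi> w = delta q 1"
      by (rule imageE) (rule that, assumption, rule sym)

    from dqW have "delta q 1 \<in> \<Psi> ` corner Q tw eps V" by (simp only: img)
    then obtain c where c: "c \<in> corner Q tw eps V" and Pc: "\<Psi> c = delta q 1"
      by (rule imageE) (rule that, assumption, rule sym)
    have inj: "inj_on \<Psi> E" using bij by (simp add: bij_betw_def)
    have wE': "w \<in> E" using w IE by (rule subsetD[rotated])
    have cE: "c \<in> E" using c VE by (rule subsetD[rotated])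
    have wc: "w = c" using inj_onD[OF inj _ wE' cE] Pw Pc by simp
    have "\<exists>z. w = cmul Q tw (cmul Q tw (e_elt Q eps) z) (e_elt Q eps) \<and> z \<in> I \<times> I"
      using w by (simp add: corner_def)
    then obtain x y where xy: "x \<in> I" "y \<in> I"
      and wdef: "w = cmul Q tw (cmul Q tw (e_elt Q eps) (x, y)) (e_elt Q eps)"
      by (metis mem_Times_iff prod.collapse)
    have wI: "fst w \<in> I" "snd w \<in> I" using corner_in_I[OF fin I xy, of eps] unfolding wdef by simp_all
    have "\<exists>z. c = cmul Q tw (cmul Q tw (e_elt Q eps) z) (e_elt Q eps) \<and> z \<in> V"
      using c by (simp add: corner_def)
    then obtain a b where cab: "c = cmul Q tw (cmul Q tw (e_elt Q eps) (delta p a, delta p b)) (e_elt Q eps)"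
      unfolding V_def by blast
    then obtain A B where cAB: "c = (delta p A, delta p B)"
      using corner_delta[where tw=tw, OF fin p z1 z2 tw0, of eps a b] unfolding cab by blast
    have AI: "delta p A \<in> I" and BI: "delta p B \<in> I" using wI unfolding wc cAB by simp_all
    have scale: "delta p 1 \<in> I" if "delta p D \<in> I" "D \<noteq> 0" for D
    proof -
      obtain D' where "D' * D = 1" using inv \<open>D \<noteq> 0\<close> by blast
      have "tmul Q tw (scal Q D') (delta p D) \<in> I"
        by (rule ideal_lmul[OF I scal_carrier[OF fin] that(1)])
      then show ?thesis by (simp add: delta_scal[OF fin p z1 z2] \<open>D' * D = 1\<close>)
    qed
    show "delta p 1 \<in> I"
    proof (cases "A = 0 \<and> B = 0")
      case False
      then show ?thesis using scale AI BI by blast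
    next
      case True
      have w0: "w = ((\<lambda>_. 0), (\<lambda>_. 0))" using wc cAB True by (auto simp: delta_def)
      have wE: "w \<in> E" using w IE by blast
      have "cadd w w = w" using w0 by (simp add: cadd_def tadd_def)
      then have "\<Psi> w = tadd (\<Psi> w) (\<Psi> w)" using add wE by metis
      then have "\<Psi> w q = \<Psi> w q + \<Psi> w q" by (metis tadd_def)
      then have "\<Psi> w q = 0" by simp
      then show ?thesis using Pw by (simp add: delta_def)
    qed
  qed
  finally show ?thesis .
qed



definition wfq :: "('v,'a) quiver \<Rightarrow> bool" where
  "wfq Q \<longleftrightarrow> (\<forall>\<alpha>\<in>arrs Q. src Q \<alpha> \<in> verts Q \<and> tgt Q \<alpha> \<in> verts Q)"

lemma all_nat_split: "(\<forall>k::nat. P k) \<longleftrightarrow> P 0 \<and> (\<forall>k. P (Suc k))"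
  by (metis not0_implies_Suc)

lemma is_path_Nil: "is_path Q (v, []) \<longleftrightarrow> v \<in> verts Q"
  by (simp add: is_path_def)

lemma is_path_Cons:
  assumes "wfq Q"
  shows "is_path Q (v, \<alpha> # as) \<longleftrightarrow> \<alpha> \<in> arrs Q \<and> src Q \<alpha> = v \<and> is_path Q (tgt Q \<alpha>, as)"
proof -
  have A: "(\<forall>k. Suc k < length (\<alpha> # as) \<longrightarrow> tgt Q ((\<alpha> # as) ! k) = src Q ((\<alpha> # as) ! Suc k))
     \<longleftrightarrow> (as \<noteq> [] \<longrightarrow> tgt Q \<alpha> = src Q (hd as)) \<and>
        (\<forall>k. Suc k < length as \<longrightarrow> tgt Q (as ! k) = src Q (as ! Suc k))"
    by (subst all_nat_split) (auto simp: hd_conv_nth)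
  show ?thesis
    unfolding is_path_def fst_conv snd_conv A using assms
    by (auto simp: wfq_def)
qed

fun lift :: "('a \<Rightarrow> bool) \<Rightarrow> bool \<Rightarrow> 'a list \<Rightarrow> ('a \<times> bool) list" where
  "lift cb b [] = []"
| "lift cb b (\<alpha> # as) = (\<alpha>, b \<noteq> cb \<alpha>) # lift cb (b \<noteq> cb \<alpha>) as"

lemma map_fst_lift: "map fst (lift cb b as) = as"
  by (induction as arbitrary: b) auto

lemma wfq_fin: "finite_quiver Q \<Longrightarrow> wfq Q"
  by (simp add: finite_quiver_def wfq_def)

lemma wfq_gammaC: "wfq Q \<Longrightarrow> wfq (gammaC Q cbar)"
  by (auto simp: wfq_def gammaC_def)

lemma lift_path:
  assumes wf: "wfq Q"
  shows "is_path Q (v, as) \<Longrightarrow> is_path (gammaC Q cbar) ((v, b), lift cbar b as)"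
proof (induction as arbitrary: v b)
  case Nil
  then show ?case by (simp add: is_path_Nil gammaC_def)
next
  case (Cons \<alpha> as)
  have wf2: "wfq (gammaC Q cbar)" by (rule wfq_gammaC[OF wf])
  from Cons.prems have h: "\<alpha> \<in> arrs Q" "src Q \<alpha> = v" "is_path Q (tgt Q \<alpha>, as)"
    using is_path_Cons[OF wf] by blast+
  show ?case
    unfolding lift.simps is_path_Cons[OF wf2]
    using h Cons.IH[OF h(3)] by (auto simp: gammaC_def)
qed

lemma lift_unique:
  assumes wf: "wfq Q"
  shows "is_path (gammaC Q cbar) (w, bs) \<Longrightarrow> map fst bs = as \<Longrightarrow> bs = lift cbar (snd w) as"
proof (induction as arbitrary: w bs)
  case Nil
  then show ?case by simp
next
  case (Cons \<alpha> as)
  have wf2: "wfq (gammaC Q cbar)" by (rule wfq_gammaC[OF wf])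
  from Cons.prems(2) obtain c bs' where bs: "bs = (\<alpha>, c) # bs'" "map fst bs' = as"
    by (cases bs) auto
  from Cons.prems(1)[unfolded bs(1) is_path_Cons[OF wf2]]
  have h: "src (gammaC Q cbar) (\<alpha>, c) = w" "is_path (gammaC Q cbar) (tgt (gammaC Q cbar) (\<alpha>, c), bs')"
    by blast+
  have w: "w = (src Q \<alpha>, c \<noteq> cbar \<alpha>)" using h(1) by (simp add: gammaC_def)
  have "bs' = lift cbar c as" using Cons.IH[OF h(2) bs(2)] by (simp add: gammaC_def)
  then show ?case using bs w by (cases c; cases "cbar \<alpha>") auto
qed

lemma quat_zero_mult: "0 * (x::quat) = 0"
  by (cases x) (simp add: times_quat_def zero_quat_def)
lemma quat_mult_zero: "(x::quat) * 0 = 0"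
  by (cases x) (simp add: times_quat_def zero_quat_def)
lemma quat_mult_one: "(x::quat) * 1 = x"
  by (cases x) (simp add: times_quat_def one_quat_def)
lemma quat_inv: "(A::quat) \<noteq> 0 \<Longrightarrow> \<exists>B. B * A = 1"
proof (cases A)
  case (Quat a b)
  assume "A \<noteq> 0"
  then have ab: "a \<noteq> 0 \<or> b \<noteq> 0" using Quat by (auto simp: zero_quat_def)
  define n where "n = (cmod a)^2 + (cmod b)^2"
  have n: "n > 0" using ab unfolding n_def
    by (metis add_nonneg_pos add_pos_nonneg norm_eq_zero zero_less_norm_iff zero_less_power2 zero_le_power2)
  have e1: "cnj a * a = complex_of_real ((cmod a)^2)"
    by (metis complex_norm_square of_real_power mult.commute)
  have e2: "b * cnj b = complex_of_real ((cmod b)^2)"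
    by (metis complex_norm_square of_real_power)
  let ?B = "Quat (cnj a / complex_of_real n) (- b / complex_of_real n)"
  have "?B * A = Quat ((cnj a * a + b * cnj b) / complex_of_real n) ((cnj a * b - b * cnj a) / complex_of_real n)"
    unfolding Quat times_quat_def
    by (simp add: algebra_simps diff_divide_distrib add_divide_distrib)
  also have "cnj a * a + b * cnj b = complex_of_real n"
    unfolding e1 e2 n_def by simp
  also have "cnj a * b - b * cnj a = 0" by simp
  finally have "?B * A = 1" using n by (simp add: one_quat_def)
  then show ?thesis by blast
qed

theorem lemma3p10:
  fixes Q :: "('v,'a) quiver"
  assumes fin: "finite_quiver Q"
  shows
    \<comment> \<open>(1) v-uniform with R\<close>
    "(\<forall>(I :: (('v,'a) path \<Rightarrow> real) set) \<Psi> p.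
        admissible Q (\<lambda>_. id) I \<and>
        complexif_iso Q (\<lambda>_. id) (1, 0) (gammaRH Q) id id \<Psi> \<and> is_path Q p \<longrightarrow>
        gammaRH Q = Q \<and> {q. fiber_of id id (gammaRH Q) q p} = {p} \<and>
        (delta p 1 \<in> R_ideal Q I \<longleftrightarrow> delta p 1 \<in> J_ideal Q (\<lambda>_. id) (1, 0) \<Psi> I))
   \<and> \<comment> \<open>(1) v-uniform with H\<close>
     (\<forall>(I :: (('v,'a) path \<Rightarrow> quat) set) \<Psi> p.
        admissible Q (\<lambda>_. id) I \<and>
        complexif_iso Q (\<lambda>_. id) (scaleR (1/2) 1, scaleR (-1/2) quat_i) (gammaRH Q) id id \<Psi>
        \<and> is_path Q p \<longrightarrow>
        gammaRH Q = Q \<and> {q. fiber_of id id (gammaRH Q) q p} = {p} \<and>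
        (delta p 1 \<in> R_ideal Q I \<longleftrightarrow>
         delta p 1 \<in> J_ideal Q (\<lambda>_. id) (scaleR (1/2) 1, scaleR (-1/2) quat_i) \<Psi> I))
   \<and> \<comment> \<open>(2) v-uniform with C\<close>
     (\<forall>cbar (I :: (('v,'a) path \<Rightarrow> complex) set) \<Psi> p.
        admissible Q (twistC cbar) I \<and>
        complexif_iso Q (twistC cbar) (1, 0) (gammaC Q cbar) fst fst \<Psi> \<and> is_path Q p \<longrightarrow>
        (\<exists>p' p''. p' \<noteq> p'' \<and> {q. fiber_of fst fst (gammaC Q cbar) q p} = {p', p''} \<and>
           (delta p 1 \<in> R_ideal Q I \<longleftrightarrow> delta p' 1 \<in> J_ideal Q (twistC cbar) (1, 0) \<Psi> I) \<and>
           (delta p' 1 \<in> J_ideal Q (twistC cbar) (1, 0) \<Psi> I \<longleftrightarrow>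
            delta p'' 1 \<in> J_ideal Q (twistC cbar) (1, 0) \<Psi> I)))"
proof (intro conjI)
  have wf: "wfq Q" by (rule wfq_fin[OF fin])
  show "\<forall>(I :: (('v,'a) path \<Rightarrow> real) set) \<Psi> p.
        admissible Q (\<lambda>_. id) I \<and>
        complexif_iso Q (\<lambda>_. id) (1, 0) (gammaRH Q) id id \<Psi> \<and> is_path Q p \<longrightarrow>
        gammaRH Q = Q \<and> {q. fiber_of id id (gammaRH Q) q p} = {p} \<and>
        (delta p 1 \<in> R_ideal Q I \<longleftrightarrow> delta p 1 \<in> J_ideal Q (\<lambda>_. id) (1, 0) \<Psi> I)"
  proof (intro allI impI)
    fix I :: "(('v,'a) path \<Rightarrow> real) set" and \<Psi> :: "('v,'a,real) cplx \<Rightarrow> ('v,'a) path \<Rightarrow> complex" and p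
    assume H: "admissible Q (\<lambda>_. id) I \<and>
        complexif_iso Q (\<lambda>_. id) (1, 0) (gammaRH Q) id id \<Psi> \<and> is_path Q p"
    then have I: "is_ideal Q (\<lambda>_. id) I" and iso: "complexif_iso Q (\<lambda>_. id) (1, 0) (gammaRH Q) id id \<Psi>"
      and p: "is_path Q p" by (auto simp: admissible_def)
    have fib: "fiber_of id id (gammaRH Q) p p" using p by (simp add: fiber_of_def gammaRH_def)
    have inv: "\<exists>B. B * A = 1" if "A \<noteq> 0" for A :: real
      using that by (intro exI[of _ "inverse A"]) simp
    have "{q. fiber_of id id (gammaRH Q) q p} = {p}"
      using p by (auto simp: fiber_of_def gammaRH_def prod_eq_iff)
    moreover have "delta p 1 \<in> R_ideal Q I \<longleftrightarrow> delta p 1 \<in> J_ideal Q (\<lambda>_. id) (1, 0) \<Psi> I"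
      by (rule generic[OF fin I iso p fib]) (simp_all add: inv)
    ultimately show "gammaRH Q = Q \<and> {q. fiber_of id id (gammaRH Q) q p} = {p} \<and>
        (delta p 1 \<in> R_ideal Q I \<longleftrightarrow> delta p 1 \<in> J_ideal Q (\<lambda>_. id) (1, 0) \<Psi> I)"
      by (simp add: gammaRH_def)
  qed
  show "\<forall>(I :: (('v,'a) path \<Rightarrow> quat) set) \<Psi> p.
        admissible Q (\<lambda>_. id) I \<and>
        complexif_iso Q (\<lambda>_. id) (scaleR (1/2) 1, scaleR (-1/2) quat_i) (gammaRH Q) id id \<Psi>
        \<and> is_path Q p \<longrightarrow>
        gammaRH Q = Q \<and> {q. fiber_of id id (gammaRH Q) q p} = {p} \<and>
        (delta p 1 \<in> R_ideal Q I \<longleftrightarrow>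
         delta p 1 \<in> J_ideal Q (\<lambda>_. id) (scaleR (1/2) 1, scaleR (-1/2) quat_i) \<Psi> I)"
  proof (intro allI impI)
    fix I :: "(('v,'a) path \<Rightarrow> quat) set" and \<Psi> :: "('v,'a,quat) cplx \<Rightarrow> ('v,'a) path \<Rightarrow> complex" and p
    assume H: "admissible Q (\<lambda>_. id) I \<and>
        complexif_iso Q (\<lambda>_. id) (scaleR (1/2) 1, scaleR (-1/2) quat_i) (gammaRH Q) id id \<Psi>
        \<and> is_path Q p"
    then have I: "is_ideal Q (\<lambda>_. id) I"
      and iso: "complexif_iso Q (\<lambda>_. id) (scaleR (1/2) 1, scaleR (-1/2) quat_i) (gammaRH Q) id id \<Psi>"
      and p: "is_path Q p" by (auto simp: admissible_def)
    have fib: "fiber_of id id (gammaRH Q) p p" using p by (simp add: fiber_of_def gammaRH_def)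
    have "{q. fiber_of id id (gammaRH Q) q p} = {p}"
      using p by (auto simp: fiber_of_def gammaRH_def prod_eq_iff)
    moreover have "delta p 1 \<in> R_ideal Q I \<longleftrightarrow>
         delta p 1 \<in> J_ideal Q (\<lambda>_. id) (scaleR (1/2) 1, scaleR (-1/2) quat_i) \<Psi> I"
      by (rule generic[OF fin I iso p fib])
        (simp_all add: quat_zero_mult quat_mult_zero quat_mult_one quat_inv)
    ultimately show "gammaRH Q = Q \<and> {q. fiber_of id id (gammaRH Q) q p} = {p} \<and>
        (delta p 1 \<in> R_ideal Q I \<longleftrightarrow>
         delta p 1 \<in> J_ideal Q (\<lambda>_. id) (scaleR (1/2) 1, scaleR (-1/2) quat_i) \<Psi> I)"
      by (simp add: gammaRH_def)
  qed
  show "\<forall>cbar (I :: (('v,'a) path \<Rightarrow> complex) set) \<Psi> p.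
        admissible Q (twistC cbar) I \<and>
        complexif_iso Q (twistC cbar) (1, 0) (gammaC Q cbar) fst fst \<Psi> \<and> is_path Q p \<longrightarrow>
        (\<exists>p' p''. p' \<noteq> p'' \<and> {q. fiber_of fst fst (gammaC Q cbar) q p} = {p', p''} \<and>
           (delta p 1 \<in> R_ideal Q I \<longleftrightarrow> delta p' 1 \<in> J_ideal Q (twistC cbar) (1, 0) \<Psi> I) \<and>
           (delta p' 1 \<in> J_ideal Q (twistC cbar) (1, 0) \<Psi> I \<longleftrightarrow>
            delta p'' 1 \<in> J_ideal Q (twistC cbar) (1, 0) \<Psi> I))"
  proof (intro allI impI)
    fix cbar and I :: "(('v,'a) path \<Rightarrow> complex) set" and \<Psi> :: "('v,'a,complex) cplx \<Rightarrow> ('v \<times> bool,'a \<times> bool) path \<Rightarrow> complex" and p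
    assume H: "admissible Q (twistC cbar) I \<and>
        complexif_iso Q (twistC cbar) (1, 0) (gammaC Q cbar) fst fst \<Psi> \<and> is_path Q p"
    then have I: "is_ideal Q (twistC cbar) I"
      and iso: "complexif_iso Q (twistC cbar) (1, 0) (gammaC Q cbar) fst fst \<Psi>"
      and p: "is_path Q p" by (auto simp: admissible_def)
    define G where "G = gammaC Q cbar"
    define fb where "fb = (\<lambda>b. ((fst p, b), lift cbar b (snd p)))"
    have fibb: "fiber_of fst fst G (fb b) p" for b
    proof -
      have "is_path Q (fst p, snd p)" using p by simp
      then have "is_path G (fb b)" unfolding fb_def G_def by (rule lift_path[OF wf])
      then show ?thesis by (simp add: fiber_of_def fb_def map_fst_lift)
    qed
    have qfb: "q = fb (snd (fst q))" if "fiber_of fst fst G q p" for q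
    proof -
      have q: "is_path G (fst q, snd q)" "fst (fst q) = fst p" "map fst (snd q) = snd p"
        using that by (auto simp: fiber_of_def)
      have "snd q = lift cbar (snd (fst q)) (snd p)"
        using lift_unique[OF wf q(1)[unfolded G_def] q(3)] .
      then show ?thesis using q(2) unfolding fb_def by (simp add: prod_eq_iff)
    qed
    have fibs: "{q. fiber_of fst fst G q p} = {fb False, fb True}"
    proof (rule set_eqI)
      fix q
      show "q \<in> {q. fiber_of fst fst G q p} \<longleftrightarrow> q \<in> {fb False, fb True}"
      proof
        assume "q \<in> {q. fiber_of fst fst G q p}"
        then have "q = fb (snd (fst q))" using qfb by blast
        then show "q \<in> {fb False, fb True}" by (cases "snd (fst q)") auto
      next
        assume "q \<in> {fb False, fb True}"
        then show "q \<in> {q. fiber_of fst fst G q p}" using fibb by auto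
      qed
    qed
    have ne: "fb False \<noteq> fb True" by (simp add: fb_def)
    have inv: "\<exists>B. B * A = 1" if "A \<noteq> 0" for A :: complex
      using that by (intro exI[of _ "inverse A"]) simp
    have tw0: "\<And>\<alpha>. twistC cbar \<alpha> 0 = 0" by (simp add: twistC_def)
    have e: "delta p 1 \<in> R_ideal Q I \<longleftrightarrow> delta (fb b) 1 \<in> J_ideal Q (twistC cbar) (1, 0) \<Psi> I" for b
      by (rule generic[OF fin I iso p fibb[unfolded G_def]]) (simp_all add: inv tw0)
    show "\<exists>p' p''. p' \<noteq> p'' \<and> {q. fiber_of fst fst (gammaC Q cbar) q p} = {p', p''} \<and>
           (delta p 1 \<in> R_ideal Q I \<longleftrightarrow> delta p' 1 \<in> J_ideal Q (twistC cbar) (1, 0) \<Psi> I) \<and>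
           (delta p' 1 \<in> J_ideal Q (twistC cbar) (1, 0) \<Psi> I \<longleftrightarrow>
            delta p'' 1 \<in> J_ideal Q (twistC cbar) (1, 0) \<Psi> I)"
    proof (intro exI conjI)
      show "fb False \<noteq> fb True" by (rule ne)
      show "{q. fiber_of fst fst (gammaC Q cbar) q p} = {fb False, fb True}"
        using fibs by (simp only: G_def)
      show "delta p 1 \<in> R_ideal Q I \<longleftrightarrow> delta (fb False) 1 \<in> J_ideal Q (twistC cbar) (1, 0) \<Psi> I"
        by (rule e)
      show "delta (fb False) 1 \<in> J_ideal Q (twistC cbar) (1, 0) \<Psi> I \<longleftrightarrow>
            delta (fb True) 1 \<in> J_ideal Q (twistC cbar) (1, 0) \<Psi> I"
        using e[of False] e[of True] by (simp only:)
    qed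
  qed
qed

end
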